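(* Equip $S^2\subset\mathbb{R}^3$ with the topological quandle operation $x*y=2(x\cdot y)y-x$ and $\mathbb{RP}^2$ with the induced topological quandle operation $[x]*[y]=[2(x\cdot y)y-x]$. Let $\mathbb{Z}_2$ carry the discrete topology and trivial quandle structure ($T=1$). Then $H^2_Q(\mathbb{RP}^2,\mathbb{Z}_2)\neq0$, while $H^2_C(\mathbb{RP}^2,\mathbb{Z}_2)=0$.
   Context: For a quandle $X$ and abelian group $A$ (with $T=1$): $H^2_Q(X,A)$ is the (discrete) quandle cohomology, i.e. the group of all maps $\phi:X\times X\to A$ with $\phi(x,x)=0$ and $\phi(x_1,x_2)+\phi(x_1*x_2,x_3)=\phi(x_1,x_3)+\phi(x_1*x_3,x_2*x_3)$, modulo the maps $(x,y)\mapsto f(x)-f(x*y)$ for arbitrary $f:X\to A$. $H^2_C(X,A)$ is defined the same way but with all maps $\phi$ and $f$ required to be continuous ($X\times X$ with product topology). *)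

theory Defs
  imports "HOL-Analysis.Analysis" "HOL-Library.Z2"
begin

definition S2 :: "(real^3) set" where
  "S2 = sphere 0 1"

definition s2_op :: "real^3 \<Rightarrow> real^3 \<Rightarrow> real^3" where
  "s2_op x y = (2 * (x \<bullet> y)) *\<^sub>R y - x"

definition rp2_class :: "real^3 \<Rightarrow> (real^3) set" where
  "rp2_class x = {x, -x}"

definition RP2 :: "(real^3) set set" where
  "RP2 = rp2_class ` S2"

definition rp2_op :: "(real^3) set \<Rightarrow> (real^3) set \<Rightarrow> (real^3) set" where
  "rp2_op A B = rp2_class (s2_op (SOME x. x \<in> A) (SOME y. y \<in> B))"

definition quotient_topology :: "'a topology \<Rightarrow> ('a \<Rightarrow> 'b) \<Rightarrow> 'b set \<Rightarrow> 'b topology" where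
  "quotient_topology X f Y = topology (\<lambda>U. U \<subseteq> Y \<and> openin X {x \<in> topspace X. f x \<in> U})"

lemma istopology_quotient:
  "istopology (\<lambda>U. U \<subseteq> Y \<and> openin X {x \<in> topspace X. f x \<in> U})"
  unfolding istopology_def
proof (rule conjI; intro allI impI)
  fix S T
  assume a: "S \<subseteq> Y \<and> openin X {x \<in> topspace X. f x \<in> S}"
    and b: "T \<subseteq> Y \<and> openin X {x \<in> topspace X. f x \<in> T}"
  have e: "{x \<in> topspace X. f x \<in> S \<inter> T} = {x \<in> topspace X. f x \<in> S} \<inter> {x \<in> topspace X. f x \<in> T}"
    by auto
  show "S \<inter> T \<subseteq> Y \<and> openin X {x \<in> topspace X. f x \<in> S \<inter> T}"
    using a b by (simp only: e) (auto intro: openin_Int)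
next
  fix K
  assume a: "\<forall>U\<in>K. U \<subseteq> Y \<and> openin X {x \<in> topspace X. f x \<in> U}"
  have e: "{x \<in> topspace X. f x \<in> \<Union>K} = \<Union>((\<lambda>U. {x \<in> topspace X. f x \<in> U}) ` K)"
    by auto
  show "\<Union>K \<subseteq> Y \<and> openin X {x \<in> topspace X. f x \<in> \<Union>K}"
    using a by (simp only: e) (auto intro!: openin_Union)
qed

definition RP2_top :: "(real^3) set topology" where
  "RP2_top = quotient_topology (top_of_set S2) rp2_class RP2"

text \<open>Quandle 2-cocycles and 2-coboundaries (trivial action T = 1) on a carrier X with operation op.\<close>
definition quandle_2cocycle ::
  "'a set \<Rightarrow> ('a \<Rightarrow> 'a \<Rightarrow> 'a) \<Rightarrow> ('a \<Rightarrow> 'a \<Rightarrow> 'b::ab_group_add) \<Rightarrow> bool" where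
  "quandle_2cocycle X op \<phi> \<longleftrightarrow>
     (\<forall>x\<in>X. \<phi> x x = 0) \<and>
     (\<forall>x1\<in>X. \<forall>x2\<in>X. \<forall>x3\<in>X.
        \<phi> x1 x2 + \<phi> (op x1 x2) x3 = \<phi> x1 x3 + \<phi> (op x1 x3) (op x2 x3))"

definition quandle_2coboundary_of ::
  "'a set \<Rightarrow> ('a \<Rightarrow> 'a \<Rightarrow> 'a) \<Rightarrow> ('a \<Rightarrow> 'b::ab_group_add) \<Rightarrow> ('a \<Rightarrow> 'a \<Rightarrow> 'b) \<Rightarrow> bool" where
  "quandle_2coboundary_of X op f \<phi> \<longleftrightarrow> (\<forall>x\<in>X. \<forall>y\<in>X. \<phi> x y = f x - f (op x y))"

definition H2Q_nonzero :: "'a set \<Rightarrow> ('a \<Rightarrow> 'a \<Rightarrow> 'a) \<Rightarrow> 'b::ab_group_add itself \<Rightarrow> bool" where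
  "H2Q_nonzero X op _ \<longleftrightarrow>
     (\<exists>\<phi> :: 'a \<Rightarrow> 'a \<Rightarrow> 'b. quandle_2cocycle X op \<phi> \<and> \<not> (\<exists>f. quandle_2coboundary_of X op f \<phi>))"

definition H2C_zero :: "'a topology \<Rightarrow> 'a set \<Rightarrow> ('a \<Rightarrow> 'a \<Rightarrow> 'a) \<Rightarrow> 'b::ab_group_add itself \<Rightarrow> bool" where
  "H2C_zero T X op _ \<longleftrightarrow>
     (\<forall>\<phi> :: 'a \<Rightarrow> 'a \<Rightarrow> 'b.
        quandle_2cocycle X op \<phi> \<and>
        continuous_map (prod_topology T T) (discrete_topology UNIV) (\<lambda>(x, y). \<phi> x y)
        \<longrightarrow> (\<exists>f. continuous_map T (discrete_topology UNIV) f \<and> quandle_2coboundary_of X op f \<phi>))"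

end

theory Submission
  imports Defs
begin

lemma openin_RP2_top:
  "openin RP2_top U \<longleftrightarrow> U \<subseteq> RP2 \<and> openin (top_of_set S2) {x \<in> S2. rp2_class x \<in> U}"
  unfolding RP2_top_def quotient_topology_def
  by (subst topology_inverse'[OF istopology_quotient]) simp

lemma topspace_RP2_top: "topspace RP2_top = RP2"
proof -
  have e: "{x \<in> S2. rp2_class x \<in> rp2_class ` S2} = topspace (top_of_set S2)" by auto
  have "openin RP2_top RP2"
    unfolding openin_RP2_top RP2_def by (simp only: e openin_topspace) simp
  then have "RP2 \<subseteq> topspace RP2_top" by (rule openin_subset)
  moreover have "topspace RP2_top \<subseteq> RP2"
    using openin_RP2_top openin_topspace by blast
  ultimately show ?thesis by blast
qed

lemma cont_class: "continuous_map (top_of_set S2) RP2_top rp2_class"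
  unfolding continuous_map_def topspace_RP2_top
  by (auto simp: openin_RP2_top RP2_def)

lemma conn_RP2: "connected_space RP2_top"
proof -
  have "connected S2" unfolding S2_def by (rule connected_sphere) simp
  then have "connectedin (top_of_set S2) S2" by (simp add: connectedin_subtopology)
  then have "connectedin RP2_top (rp2_class ` S2)"
    by (rule connectedin_continuous_map_image[OF cont_class])
  then show ?thesis
    by (metis RP2_def connectedin_topspace topspace_RP2_top)
qed

lemma H2C: "H2C_zero RP2_top RP2 rp2_op TYPE(bit)"
  unfolding H2C_zero_def
proof (intro allI impI)
  fix \<phi> :: "(real^3) set \<Rightarrow> (real^3) set \<Rightarrow> bit"
  assume a: "quandle_2cocycle RP2 rp2_op \<phi> \<and>
        continuous_map (prod_topology RP2_top RP2_top) (discrete_topology UNIV) (\<lambda>(x, y). \<phi> x y)"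
  have "connected_space (prod_topology RP2_top RP2_top)"
    using conn_RP2 connected_space_prod_topology by blast
  then have "connectedin (discrete_topology UNIV) ((\<lambda>(x, y). \<phi> x y) ` topspace (prod_topology RP2_top RP2_top))"
    using a connectedin_continuous_map_image connectedin_topspace by blast
  then obtain c where c: "\<And>x y. x \<in> RP2 \<Longrightarrow> y \<in> RP2 \<Longrightarrow> \<phi> x y = c"
  proof -
    from \<open>connectedin _ _\<close> obtain a where "(\<lambda>(x, y). \<phi> x y) ` (RP2 \<times> RP2) \<subseteq> {a}"
      by (auto simp: connectedin_discrete_topology topspace_RP2_top)
    then have "\<And>x y. x \<in> RP2 \<Longrightarrow> y \<in> RP2 \<Longrightarrow> \<phi> x y = a" by blast
    then show ?thesis using that by blast
  qed
  have "RP2 \<noteq> {}" unfolding RP2_def S2_def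
    by (simp add: sphere_eq_empty)
  then obtain x where x: "x \<in> RP2" by blast
  have "c = 0" using a c[OF x x] x by (auto simp: quandle_2cocycle_def)
  then have "quandle_2coboundary_of RP2 rp2_op (\<lambda>_. 0) \<phi>"
    using c by (simp add: quandle_2coboundary_of_def)
  then show "\<exists>f. continuous_map RP2_top (discrete_topology UNIV) f \<and> quandle_2coboundary_of RP2 rp2_op f \<phi>"
    by (intro exI[of _ "\<lambda>_. 0"]) auto
qed


definition rep :: "(real^3) set \<Rightarrow> real^3" where
  "rep A = (SOME x. x \<in> A)"

lemma S2_iff: "v \<in> S2 \<longleftrightarrow> norm v = 1"
  by (simp add: S2_def)

lemma S2_inner: "v \<in> S2 \<Longrightarrow> v \<bullet> v = 1"
  by (simp add: S2_def norm_eq_1)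

lemma S2_nz: "v \<in> S2 \<Longrightarrow> v \<noteq> 0"
  by (auto simp: S2_def)

lemma class_neg: "rp2_class (-v) = rp2_class v"
  by (auto simp: rp2_class_def)

lemma class_sg: "t = 1 \<or> t = -1 \<Longrightarrow> rp2_class (t *\<^sub>R v) = rp2_class v"
  using class_neg by auto

lemma rep_of_class0: "rep (rp2_class v) \<in> rp2_class v"
  unfolding rep_def rp2_class_def by (rule someI[of _ v]) simp

lemma rep_in: "A \<in> RP2 \<Longrightarrow> rep A \<in> A"
  unfolding RP2_def using rep_of_class0 by blast

lemma rep_S2: "A \<in> RP2 \<Longrightarrow> rep A \<in> S2"
proof -
  assume "A \<in> RP2"
  then obtain v where v: "v \<in> S2" "A = {v, -v}" by (auto simp: RP2_def rp2_class_def)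
  then show ?thesis using rep_in[OF \<open>A \<in> RP2\<close>] by (auto simp: S2_def)
qed

lemma rep_class: "A \<in> RP2 \<Longrightarrow> rp2_class (rep A) = A"
proof -
  assume "A \<in> RP2"
  then obtain v where v: "v \<in> S2" "A = {v, -v}" by (auto simp: RP2_def rp2_class_def)
  then show ?thesis using rep_in[OF \<open>A \<in> RP2\<close>] by (auto simp: rp2_class_def)
qed

lemma rep_of_class: "rep (rp2_class v) = v \<or> rep (rp2_class v) = -v"
proof -
  have "rep (rp2_class v) \<in> rp2_class v" unfolding rep_def rp2_class_def by (rule someI[of _ v]) simp
  then show ?thesis by (auto simp: rp2_class_def)
qed

lemma op_neg1: "s2_op (-a) b = - s2_op a b"
  by (simp add: s2_op_def algebra_simps)

lemma op_scale1: "s2_op (t *\<^sub>R a) b = t *\<^sub>R s2_op a b"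
  by (simp add: s2_op_def algebra_simps)

lemma op_scale2: "t * t = 1 \<Longrightarrow> s2_op a (t *\<^sub>R b) = s2_op a b"
  by (simp add: s2_op_def algebra_simps)

lemma op_S2: "a \<in> S2 \<Longrightarrow> b \<in> S2 \<Longrightarrow> s2_op a b \<in> S2"
proof -
  assume a: "a \<in> S2" and b: "b \<in> S2"
  have aa: "a \<bullet> a = 1" and bb: "b \<bullet> b = 1" using a b S2_inner by auto
  have "s2_op a b \<bullet> s2_op a b = 1"
    unfolding s2_op_def by (simp add: inner_diff_left inner_diff_right aa bb inner_commute algebra_simps)
  then show ?thesis unfolding S2_iff by (simp add: norm_eq_sqrt_inner)
qed

lemma op_idem: "a \<in> S2 \<Longrightarrow> s2_op a a = a"
proof -
  assume "a \<in> S2"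
  then have "a \<bullet> a = 1" by (rule S2_inner)
  then have "s2_op a a = 2 *\<^sub>R a - a" by (simp add: s2_op_def)
  also have "\<dots> = a" by (simp only: scaleR_2) simp
  finally show ?thesis .
qed

lemma op_distrib:
  assumes "c \<bullet> c = 1"
  shows "s2_op (s2_op a b) c = s2_op (s2_op a c) (s2_op b c)"
proof -
  have ip: "s2_op u c \<bullet> s2_op v c = u \<bullet> v" for u v
    unfolding s2_op_def using assms
    by (simp add: inner_diff_left inner_diff_right inner_commute algebra_simps)
  have lin: "s2_op (t *\<^sub>R u - v) c = t *\<^sub>R s2_op u c - s2_op v c" for t u v
    by (simp add: s2_op_def algebra_simps inner_diff_left)
  have "s2_op (s2_op a c) (s2_op b c) = (2 * (a \<bullet> b)) *\<^sub>R s2_op b c - s2_op a c"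
    unfolding s2_op_def[of "s2_op a c"] ip ..
  also have "\<dots> = s2_op ((2 * (a \<bullet> b)) *\<^sub>R b - a) c" by (rule lin[symmetric])
  finally show ?thesis by (simp add: s2_op_def[of a b])
qed

lemma op_RP2: "A \<in> RP2 \<Longrightarrow> B \<in> RP2 \<Longrightarrow> rp2_op A B \<in> RP2"
proof -
  assume A: "A \<in> RP2" and B: "B \<in> RP2"
  have "s2_op (rep A) (rep B) \<in> S2" using op_S2 rep_S2 A B by blast
  then have "rp2_class (s2_op (rep A) (rep B)) \<in> RP2" unfolding RP2_def by (rule imageI)
  then show ?thesis unfolding rp2_op_def rep_def[symmetric] .
qed

definition phi :: "(real^3) set \<Rightarrow> (real^3) set \<Rightarrow> bit" where
  "phi A B = (if s2_op (rep A) (rep B) = rep (rp2_op A B) then 0 else 1)"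

definition sg :: "(real^3) set \<Rightarrow> (real^3) set \<Rightarrow> real" where
  "sg A B = (if phi A B = 0 then 1 else -1)"

lemma sg_sq: "sg A B * sg A B = 1" and sg_pm: "sg A B = 1 \<or> sg A B = -1"
  by (auto simp: sg_def)

lemma key: "s2_op (rep A) (rep B) = sg A B *\<^sub>R rep (rp2_op A B)"
proof -
  have r: "rep (rp2_op A B) = s2_op (rep A) (rep B) \<or> rep (rp2_op A B) = - s2_op (rep A) (rep B)"
    unfolding rp2_op_def rep_def[symmetric] by (rule rep_of_class)
  then show ?thesis by (auto simp: sg_def phi_def)
qed

lemma key': "rep (rp2_op A B) = sg A B *\<^sub>R s2_op (rep A) (rep B)"
  using key[of A B] sg_sq[of A B] by simp

lemma bit_lemma:
  fixes p q r s :: bit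
  assumes "(if p = 0 then 1 else -1) * (if q = 0 then 1 else -1) =
           (if r = 0 then 1 else -1) * ((if s = 0 then 1 else -1) :: real)"
  shows "p + q = r + s"
proof -
  have "p = 0 \<or> p = 1" "q = 0 \<or> q = 1" "r = 0 \<or> r = 1" "s = 0 \<or> s = 1"
    using bit_not_zero_iff by blast+
  then show ?thesis using assms by auto
qed

lemma cocycle: "quandle_2cocycle RP2 rp2_op phi"
  unfolding quandle_2cocycle_def
proof (intro conjI ballI)
  fix x assume x: "x \<in> RP2"
  have "rp2_op x x = x"
    unfolding rp2_op_def rep_def[symmetric] using op_idem[OF rep_S2[OF x]] rep_class[OF x] by simp
  then show "phi x x = 0" using op_idem[OF rep_S2[OF x]] by (simp add: phi_def)
next
  fix x1 x2 x3 assume x1: "x1 \<in> RP2" and x2: "x2 \<in> RP2" and x3: "x3 \<in> RP2"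
  define a1 a2 a3 where "a1 = rep x1" "a2 = rep x2" "a3 = rep x3"
  define x12 x13 x23 where "x12 = rp2_op x1 x2" "x13 = rp2_op x1 x3" "x23 = rp2_op x2 x3"
  have c3: "a3 \<bullet> a3 = 1" using S2_inner rep_S2 x3 a1_a2_a3_def by auto
  define P where "P = s2_op (s2_op a1 a2) a3"
  have PQ: "P = s2_op (s2_op a1 a3) (s2_op a2 a3)" unfolding P_def by (rule op_distrib[OF c3])
  have P1: "P = (sg x1 x2 * sg x12 x3) *\<^sub>R rep (rp2_op x12 x3)"
    unfolding P_def a1_a2_a3_def key x12_x13_x23_def op_scale1 key by simp
  have P2: "P = (sg x1 x3 * sg x13 x23) *\<^sub>R rep (rp2_op x13 x23)"
    unfolding PQ a1_a2_a3_def key x12_x13_x23_def op_scale1 op_scale2[OF sg_sq] key by simp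
  have cl1: "rp2_op x12 x3 = rp2_class P"
  proof -
    have "rp2_op x12 x3 = rp2_class (s2_op (rep x12) a3)"
      unfolding rp2_op_def rep_def[symmetric] a1_a2_a3_def ..
    also have "\<dots> = rp2_class (sg x1 x2 *\<^sub>R P)"
      unfolding x12_x13_x23_def key' op_scale1 P_def a1_a2_a3_def ..
    finally show ?thesis using class_sg[OF sg_pm] by simp
  qed
  have cl2: "rp2_op x13 x23 = rp2_class P"
  proof -
    have "rp2_op x13 x23 = rp2_class (s2_op (rep x13) (rep x23))"
      unfolding rp2_op_def rep_def[symmetric] ..
    also have "\<dots> = rp2_class (sg x1 x3 *\<^sub>R P)"
      unfolding x12_x13_x23_def key' op_scale1 op_scale2[OF sg_sq] PQ a1_a2_a3_def ..
    finally show ?thesis using class_sg[OF sg_pm] by simp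
  qed
  have inR: "rp2_op x12 x3 \<in> RP2" using op_RP2 x1 x2 x3 x12_x13_x23_def by auto
  have nz: "rep (rp2_op x12 x3) \<noteq> 0" using S2_nz rep_S2[OF inR] by blast
  have P1': "P = (sg x1 x2 * sg x12 x3) *\<^sub>R rep (rp2_op x12 x3)" by (rule P1)
  have P2': "P = (sg x1 x3 * sg x13 x23) *\<^sub>R rep (rp2_op x12 x3)"
    using P2 cl1 cl2 by (simp only:)
  have e: "(sg x1 x2 * sg x12 x3) *\<^sub>R rep (rp2_op x12 x3) = (sg x1 x3 * sg x13 x23) *\<^sub>R rep (rp2_op x12 x3)"
    by (rule trans[OF sym[OF P1'] P2'])
  have "sg x1 x2 * sg x12 x3 = sg x1 x3 * sg x13 x23"
    using e nz by (simp only: scaleR_cancel_right) blast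
  then have "phi x1 x2 + phi x12 x3 = phi x1 x3 + phi x13 x23"
    by (intro bit_lemma) (simp add: sg_def)
  then show "phi x1 x2 + phi (rp2_op x1 x2) x3 = phi x1 x3 + phi (rp2_op x1 x3) (rp2_op x2 x3)"
    unfolding x12_x13_x23_def .
qed

lemma H2Q: "H2Q_nonzero RP2 rp2_op TYPE(bit)"
  unfolding H2Q_nonzero_def
proof (intro exI conjI)
  show "quandle_2cocycle RP2 rp2_op phi" by (rule cocycle)
  show "\<not> (\<exists>f. quandle_2coboundary_of RP2 rp2_op f phi)"
  proof
    assume "\<exists>f. quandle_2coboundary_of RP2 rp2_op f phi"
    then obtain f where f: "quandle_2coboundary_of RP2 rp2_op f phi" by blast
    define e1 e2 :: "real^3" where "e1 = axis 1 1" "e2 = axis 2 1"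
    have e1: "e1 \<in> S2" and e2: "e2 \<in> S2" by (auto simp: S2_def e1_e2_def)
    define X Y where "X = rp2_class e1" "Y = rp2_class e2"
    have X: "X \<in> RP2" and Y: "Y \<in> RP2" using e1 e2 by (auto simp: RP2_def X_Y_def)
    have "rep X = e1 \<or> rep X = - e1" "rep Y = e2 \<or> rep Y = - e2"
      using rep_of_class X_Y_def by auto
    moreover have "e1 \<bullet> e2 = 0" by (simp add: e1_e2_def inner_axis_axis)
    ultimately have orth: "rep X \<bullet> rep Y = 0" by auto
    then have so: "s2_op (rep X) (rep Y) = - rep X" by (simp add: s2_op_def)
    have XY: "rp2_op X Y = X"
      unfolding rp2_op_def rep_def[symmetric] so class_neg using rep_class[OF X] .
    have "rep X \<noteq> - rep X"
    proof
      assume "rep X = - rep X"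
      then have "rep X + rep X = 0" by (metis add.right_inverse)
      then have "2 *\<^sub>R rep X = 0" by (simp only: scaleR_2)
      then show False using S2_nz[OF rep_S2[OF X]] by simp
    qed
    then have "phi X Y = 1" by (simp add: phi_def XY so)
    moreover have "phi X Y = 0" using f X Y XY by (simp add: quandle_2coboundary_of_def)
    ultimately show False by simp
  qed
qed

theorem mainTheorem9:
  shows "H2Q_nonzero RP2 rp2_op TYPE(bit) \<and> H2C_zero RP2_top RP2 rp2_op TYPE(bit)"
  using H2Q H2C by blast

end
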